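(* Let $V$ be a finite-dimensional real vector space and let $X:\lambda\to\mathrm{End}(V)$ be a map such that for all $\alpha,\beta\in\lambda$: $X(\alpha)X(\beta)-X(\beta)X(\alpha)=0$ if $(\alpha|\beta)=0$, and $X(\alpha)X(\beta)+X(\beta)X(\alpha)=X(\alpha\pm\beta)$ if $(\alpha|\beta)=\mp1$ and $\alpha\pm\beta\in\lambda$. Then the assignment $X_i\mapsto X(\alpha_i)\otimes\Gamma(\alpha_i)\in\mathrm{End}(V\otimes S)$ extends to a finite-dimensional representation $\sigma$ of $\mathfrak k$ on $V\otimes S$.
   Context: Let $A=(a_{ij})_{1\le i,j\le n}$ be a symmetrizable simply laced generalized Cartan matrix (off-diagonal entries $0$ or $-1$); the Dynkin diagram has an edge between $i\ne j$ iff $a_{ij}=-1$. Let $\mathfrak g$ be the split real Kac–Moody algebra of $A$ with Chevalley generators $e_i,f_i$, Cartan subalgebra $\mathfrak h$ (from a real realization), simple roots $\alpha_1,\dots,\alpha_n\in\mathfrak h^*$, and let $(\cdot|\cdot)$ be the nondegenerate invariant symmetric bilinear form induced on $\mathfrak h^*$, with $(\alpha_i|\alpha_j)=a_{ij}$. Let $\mathfrak k$ be the fixed-point subalgebra of the Chevalley involution ($e_i\mapsto -f_i$, $f_i\mapsto-e_i$, $h\mapsto -h$), with Berman generators $X_i=e_i-f_i$; $\mathfrak k$ is presented by generators $X_1,\dots,X_n$ and relations $[X_i,[X_i,X_j]]=-X_j$ if $a_{ij}=-1$, $[X_i,X_j]=0$ if $a_{ij}=0$. Let $\lambda$ be the set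 of real roots consisting of the simple roots $\alpha_1,\dots,\alpha_n$ together with all $\alpha_i+\alpha_j$ for $i,j$ forming an edge of the Dynkin diagram. A generalized spin representation is a representation $\rho$ of $\mathfrak k$ with $\rho(X_i)^2=-\frac14\mathrm{id}$ for all $i$. Fix a finite-dimensional real vector space $S$ with positive definite inner product and orthonormal basis $f_1,\dots,f_l$, and a generalized spin representation $\rho:\mathfrak k\to\mathrm{End}(S)$ whose values $\rho(X_i)$ are anti-symmetric real matrices with respect to this basis (such exist, e.g. by realifying the generalized spin representations with compact image constructed by Hainke–Köhl–Levy); put $\Gamma(\alpha_i):=2\rho(X_i)$. *)

theory Defs
  imports "HOL-Analysis.Analysis" "HOL-Library.Function_Algebras"
begin

text \<open>Indices of the simple roots are the elements of a finite type 'n.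
  Roots are represented by their coefficient vectors w.r.t. the simple roots
  (the simple roots are linearly independent in h*), i.e. as 'n => int.\<close>

definition simply_laced_gcm :: "('n::finite \<Rightarrow> 'n \<Rightarrow> int) \<Rightarrow> bool" where
  "simply_laced_gcm A \<longleftrightarrow>
     (\<forall>i. A i i = 2) \<and> (\<forall>i j. i \<noteq> j \<longrightarrow> A i j = 0 \<or> A i j = -1) \<and>
     (\<forall>i j. A i j = A j i)"

definition simple_root :: "'n \<Rightarrow> ('n \<Rightarrow> int)" where
  "simple_root i = (\<lambda>k. if k = i then 1 else 0)"

definition root_form :: "('n::finite \<Rightarrow> 'n \<Rightarrow> int) \<Rightarrow> ('n \<Rightarrow> int) \<Rightarrow> ('n \<Rightarrow> int) \<Rightarrow> int" where
  "root_form A \<alpha> \<beta> = (\<Sum>i\<in>UNIV. \<Sum>j\<in>UNIV. \<alpha> i * A i j * \<beta> j)"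

definition lam :: "('n::finite \<Rightarrow> 'n \<Rightarrow> int) \<Rightarrow> ('n \<Rightarrow> int) set" where
  "lam A = range simple_root \<union>
     {simple_root i + simple_root j | i j. i \<noteq> j \<and> A i j = -1}"

definition commutator :: "real^'a^'a \<Rightarrow> real^'a^'a \<Rightarrow> real^'a^'a" where
  "commutator P Q = P ** Q - Q ** P"

text \<open>Images Y_i of the Berman generators X_i define a representation of k
  (k is presented by the generators X_i and the relations below) iff:\<close>
definition k_relations :: "('n::finite \<Rightarrow> 'n \<Rightarrow> int) \<Rightarrow> ('n \<Rightarrow> real^'a^'a) \<Rightarrow> bool" where
  "k_relations A Y \<longleftrightarrow>
     (\<forall>i j. i \<noteq> j \<longrightarrow>
        (A i j = -1 \<longrightarrow> commutator (Y i) (commutator (Y i) (Y j)) = - Y j) \<and>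
        (A i j = 0 \<longrightarrow> commutator (Y i) (Y j) = 0))"

text \<open>Tensor product of endomorphisms (Kronecker product) on V (x) S.\<close>
definition kron :: "real^'m^'m \<Rightarrow> real^'l^'l \<Rightarrow> real^('m \<times> 'l)^('m \<times> 'l)" where
  "kron P Q = (\<chi> r. \<chi> c. P $ fst r $ fst c * Q $ snd r $ snd c)"

end

theory Submission
  imports Defs
begin

lemma mm_sub_l: "(A - B) ** (C::real^'a^'b) = A ** C - B ** (C::real^'a^'b)"
  by (simp add: matrix_matrix_mult_def vec_eq_iff left_diff_distrib sum_subtractf)
lemma mm_sub_r: "(C::real^'a^'b) ** (A - B) = C ** A - C ** B"
  by (simp add: matrix_matrix_mult_def vec_eq_iff right_diff_distrib sum_subtractf)
lemma mm_add_r: "(A + B) ** (C::real^'a^'b) = A ** C + B ** C"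
  by (simp add: matrix_matrix_mult_def vec_eq_iff distrib_right sum.distrib)
lemma mm_neg_l: "(- A) ** (C::real^'a^'b) = - (A ** C)"
  by (simp add: matrix_matrix_mult_def vec_eq_iff sum_negf)
lemma mm_neg_r: "(C::real^'a^'b) ** (- A) = - (C ** A)"
  by (simp add: matrix_matrix_mult_def vec_eq_iff sum_negf)
lemma mm_scale_l: "(c *\<^sub>R A) ** (C::real^'a^'b) = c *\<^sub>R (A ** C)"
  by (simp add: matrix_matrix_mult_def vec_eq_iff sum_distrib_left mult.assoc)
lemma mm_scale_r: "(C::real^'a^'b) ** (c *\<^sub>R A) = c *\<^sub>R (C ** A)"
  by (simp add: matrix_matrix_mult_def vec_eq_iff sum_distrib_left mult_ac)

lemma kron_mult: "kron P Q ** kron P' Q' = kron (P ** P') (Q ** Q')"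
proof -
  have "\<And>r c. (\<Sum>k\<in>UNIV. P $ fst r $ fst k * Q $ snd r $ snd k * (P' $ fst k $ fst c * Q' $ snd k $ snd c))
     = (\<Sum>a\<in>UNIV. P $ fst r $ a * P' $ a $ fst c) * (\<Sum>b\<in>UNIV. Q $ snd r $ b * Q' $ b $ snd c)"
    unfolding sum_product sum.cartesian_product UNIV_Times_UNIV by (simp add: prod.case_eq_if mult_ac)
  then show ?thesis
    by (simp add: kron_def matrix_matrix_mult_def vec_eq_iff)
qed

lemma kron_scale_r: "kron P (c *\<^sub>R Q) = c *\<^sub>R kron P Q"
  by (simp add: kron_def vec_eq_iff mult_ac)
lemma kron_add_l: "kron (P + P') Q = kron P Q + kron P' Q"
  by (simp add: kron_def vec_eq_iff distrib_right)
lemma kron_neg_r: "kron P (- Q) = - kron P Q"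
  by (simp add: kron_def vec_eq_iff)

lemma rf_simple: "root_form A (simple_root i) (simple_root j) = A i j"
proof -
  have e: "\<And>(p::bool) (y::int). (if p then 1 else 0) * y = (if p then y else 0)"
     "\<And>(p::bool) (y::int). y * (if p then 1 else 0) = (if p then y else 0)" by simp_all
  show ?thesis by (simp add: root_form_def simple_root_def e)
qed
lemma rf_add_r: "root_form A a (b + c) = root_form A a b + root_form A a c"
  by (simp add: root_form_def distrib_left sum.distrib)
lemma rf_add_l: "root_form A (b + c) a = root_form A b a + root_form A c a"
  by (simp add: root_form_def distrib_right sum.distrib)

lemma solveT: "- ((1/4::real) *\<^sub>R R) - T - T - ((1/4::real) *\<^sub>R R) = - (R::'a::real_vector) \<Longrightarrow> T = (1/4::real) *\<^sub>R R"
proof -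
  assume h: "- ((1/4::real) *\<^sub>R R) - T - T - ((1/4::real) *\<^sub>R R) = - (R::'a::real_vector)"
  have "T + T = R - (1/4::real) *\<^sub>R R - (1/4::real) *\<^sub>R R"
    using h by (simp add: algebra_simps eq_diff_eq diff_eq_eq)
  also have "... = (1 - 1/4 - 1/4::real) *\<^sub>R R" by (simp only: scaleR_diff_left scaleR_one)
  also have "... = (1/2::real) *\<^sub>R R" by simp
  finally have "(1/2::real) *\<^sub>R (T + T) = (1/2::real) *\<^sub>R ((1/2::real) *\<^sub>R R)" by simp
  thus ?thesis by (simp add: scaleR_add_right[symmetric] scaleR_2[symmetric])
qed

lemma ac_aux: "(1/4::real) *\<^sub>R a = - ((1/4::real) *\<^sub>R b) \<Longrightarrow> b = - (a::'a::real_vector)"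
proof -
  assume "(1/4::real) *\<^sub>R a = - ((1/4::real) *\<^sub>R b)"
  hence "4 *\<^sub>R ((1/4::real) *\<^sub>R a) = 4 *\<^sub>R (- ((1/4::real) *\<^sub>R b))" by simp
  thus ?thesis by simp
qed

theorem proposition4p1:
  fixes A :: "'n::finite \<Rightarrow> 'n \<Rightarrow> int"
    and Rho :: "'n \<Rightarrow> real^'l::finite^'l"
    and X :: "('n \<Rightarrow> int) \<Rightarrow> real^'m::finite^'m"
  assumes gcm: "simply_laced_gcm A"
    and rho_rep: "k_relations A Rho"
    and rho_spin: "\<And>i. Rho i ** Rho i = - ((1/4::real) *\<^sub>R mat 1)"
    and rho_antisym: "\<And>i. transpose (Rho i) = - Rho i"
    and X_comm: "\<And>\<alpha> \<beta>. \<alpha> \<in> lam A \<Longrightarrow> \<beta> \<in> lam A \<Longrightarrow> root_form A \<alpha> \<beta> = 0 \<Longrightarrow>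
        X \<alpha> ** X \<beta> - X \<beta> ** X \<alpha> = 0"
    and X_plus: "\<And>\<alpha> \<beta>. \<alpha> \<in> lam A \<Longrightarrow> \<beta> \<in> lam A \<Longrightarrow> root_form A \<alpha> \<beta> = -1 \<Longrightarrow>
        \<alpha> + \<beta> \<in> lam A \<Longrightarrow> X \<alpha> ** X \<beta> + X \<beta> ** X \<alpha> = X (\<alpha> + \<beta>)"
    and X_minus: "\<And>\<alpha> \<beta>. \<alpha> \<in> lam A \<Longrightarrow> \<beta> \<in> lam A \<Longrightarrow> root_form A \<alpha> \<beta> = 1 \<Longrightarrow>
        \<alpha> - \<beta> \<in> lam A \<Longrightarrow> X \<alpha> ** X \<beta> + X \<beta> ** X \<alpha> = X (\<alpha> - \<beta>)"
  shows "k_relations A (\<lambda>i. kron (X (simple_root i)) (2 *\<^sub>R Rho i))"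
  unfolding k_relations_def
proof (intro allI impI conjI)
  fix i j :: 'n assume ij: "i \<noteq> j"
  define G where "G = (\<lambda>k. 2 *\<^sub>R Rho k)"
  define x where "x = (\<lambda>k. X (simple_root k))"
  have lam_s: "\<And>k. simple_root k \<in> lam A" by (simp add: lam_def)
  have Aii: "A i i = 2" "A j j = 2" using gcm by (auto simp: simply_laced_gcm_def)
  have Asym: "A j i = A i j" using gcm by (auto simp: simply_laced_gcm_def)
  have GG: "G i ** G i = - mat 1"
    by (simp add: G_def mm_scale_l mm_scale_r rho_spin)
  {
    assume a: "A i j = 0"
    have "root_form A (simple_root i) (simple_root j) = 0" by (simp add: rf_simple a)
    from X_comm[OF lam_s lam_s this] have xc: "X (simple_root i) ** X (simple_root j) = X (simple_root j) ** X (simple_root i)" by simp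
    from rho_rep ij a have "commutator (Rho i) (Rho j) = 0" by (simp add: k_relations_def)
    hence "(2 *\<^sub>R Rho i) ** (2 *\<^sub>R Rho j) = (2 *\<^sub>R Rho j) ** (2 *\<^sub>R Rho i)" by (simp add: commutator_def mm_scale_l mm_scale_r)
    then show "commutator (kron (X (simple_root i)) (2 *\<^sub>R Rho i)) (kron (X (simple_root j)) (2 *\<^sub>R Rho j)) = 0"
      using xc by (simp add: commutator_def kron_mult)
  }
  {
    assume a: "A i j = -1"
    let ?R = Rho
    from rho_rep ij a have rc: "commutator (Rho i) (commutator (Rho i) (Rho j)) = - Rho j"
      by (simp add: k_relations_def)
    define T where "T = (Rho i ** Rho j) ** Rho i"
    have "(Rho i ** Rho i) ** Rho j - T - T + Rho j ** (Rho i ** Rho i) = - Rho j"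
      using rc by (simp add: commutator_def mm_sub_l mm_sub_r matrix_mul_assoc T_def algebra_simps)
    hence "- ((1/4::real) *\<^sub>R Rho j) - T - T - ((1/4::real) *\<^sub>R Rho j) = - Rho j"
      by (simp add: rho_spin mm_neg_l mm_neg_r mm_scale_l mm_scale_r)
    hence T: "T = (1/4::real) *\<^sub>R Rho j" by (rule solveT)
    have "Rho i ** T = - ((1/4::real) *\<^sub>R (Rho j ** Rho i))"
      by (simp add: T_def matrix_mul_assoc rho_spin mm_neg_l mm_scale_l)
    hence "(1/4::real) *\<^sub>R (Rho i ** Rho j) = - ((1/4::real) *\<^sub>R (Rho j ** Rho i))"
      by (simp add: T mm_scale_r)
    hence ac0: "Rho j ** Rho i = - (Rho i ** Rho j)" by (rule ac_aux)
    have GjGi: "G j ** G i = - (G i ** G j)"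
      by (simp add: G_def mm_scale_l mm_scale_r ac0)
    have GiGjGi: "(G i ** G j) ** G i = G j"
      using T by (simp add: G_def mm_scale_l mm_scale_r T_def)
    have r1: "root_form A (simple_root i) (simple_root j) = -1" by (simp add: rf_simple a)
    have sl: "simple_root i + simple_root j \<in> lam A" using ij a by (auto simp: lam_def)
    from X_plus[OF lam_s lam_s r1 sl]
    have xp: "x i ** x j + x j ** x i = X (simple_root i + simple_root j)" by (simp add: x_def)
    have r2: "root_form A (simple_root i + simple_root j) (simple_root i) = 1"
      by (simp add: rf_add_l rf_simple Aii Asym a)
    from X_minus[OF sl lam_s r2]
    have xm: "X (simple_root i + simple_root j) ** x i + x i ** X (simple_root i + simple_root j) = x j"
      by (simp add: x_def lam_s)
    define Xij where "Xij = X (simple_root i + simple_root j)"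
    have c1: "commutator (kron (x i) (G i)) (kron (x j) (G j)) = kron Xij (G i ** G j)"
      by (simp add: commutator_def kron_mult GjGi kron_neg_r kron_add_l[symmetric] xp[symmetric] Xij_def)
    have c2: "commutator (kron (x i) (G i)) (kron Xij (G i ** G j)) = - kron (x j) (G j)"
      unfolding commutator_def kron_mult matrix_mul_assoc GG GiGjGi mm_neg_l matrix_mul_lid kron_neg_r
    proof -
      have "kron (x j) (G j) = kron (x i ** Xij) (G j) + kron (Xij ** x i) (G j)"
        by (simp add: xm[symmetric] kron_add_l[symmetric] add.commute Xij_def)
      thus "- kron (x i ** Xij) (G j) - kron (Xij ** x i) (G j) = - kron (x j) (G j)"
        by (simp add: algebra_simps)
    qed
    show "commutator (kron (X (simple_root i)) (2 *\<^sub>R Rho i))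
          (commutator (kron (X (simple_root i)) (2 *\<^sub>R Rho i)) (kron (X (simple_root j)) (2 *\<^sub>R Rho j))) =
         - kron (X (simple_root j)) (2 *\<^sub>R Rho j)"
      using c1 c2 by (simp add: G_def x_def)
  }
qed

end
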